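(* Let $A$ be a $2\times2$ Hermitian matrix of Laurent polynomials with symmetry type $\mathrm{S}A(z)=\begin{bmatrix}1&\alpha(z)\\ \alpha^\star(z)&1\end{bmatrix}$, where either $\alpha(z)=\epsilon z^{2k+1}$ for some $\epsilon\in\{\pm1\}$, $k\in\mathbb Z$, or $\alpha(z)=z^{2k}$ for some $k\in\mathbb Z$. Suppose $\det(A)=C$ for some negative constant $C$. Then there exist a positive integer $K$ and strongly invertible $2\times2$ matrices $V^{(0)},\dots,V^{(K-1)}$ of Laurent polynomials with compatible symmetry such that $$A^{(K)}(z):=V^{(K-1)}(z)\cdots V^{(0)}(z)A(z)V^{(0)\star}(z)\cdots V^{(K-1)\star}(z)$$ satisfies: (i) all the multiplications in this product are compatible; (ii) at least one entry of $A^{(K)}$ is the zero Laurent polynomial.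
   Context: Laurent polynomials $u(z)=\sum_ku(k)z^k$ with finitely many nonzero complex coefficients. For a matrix $P(z)=\sum_kP(k)z^k$, $P^\star(z):=\sum_k\overline{P(k)}^Tz^{-k}$; Hermitian means $P^\star=P$. $u$ has symmetry of type $\epsilon z^c$ if $u(z)=\epsilon z^cu(z^{-1})$; for nonzero $u$, $\mathrm{S}u(z):=u(z)/u(z^{-1})$; zero has every type; for a type $\beta=\epsilon z^c$, $\beta^\star:=\epsilon z^{-c}$; $\mathrm{S}$ of a matrix is taken entrywise. A type means an expression $\pm z^m$, $m\in\mathbb Z$. An $r\times s$ matrix $P$ has compatible symmetry if there are types $\tau_1,\dots,\tau_r,\rho_1,\dots,\rho_s$ with each $P_{j,k}$ of type $\tau_j^{-1}\rho_k$. A product $P_1P_2\cdots P_m$ of matrices is compatible if there are type vectors $\tau^{(0)},\dots,\tau^{(m)}$ (of matching lengths) such that each entry $(P_i)_{j,k}$ has symmetry type $(\tau^{(i-1)}_j)^{-1}\tau^{(i)}_k$. A square matrix of Laurent polynomials is strongly invertible if its determinant is a nonzero monomial $cz^m$. *)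

theory Defs
  imports "HOL-Analysis.Analysis" "HOL-Computational_Algebra.Formal_Laurent_Series"
begin

text \<open>Laurent polynomials are represented as formal Laurent series over complex
numbers with only finitely many nonzero coefficients; the coefficient of z^k is fls_nth u k.\<close>

type_synonym lpoly = "complex fls"
type_synonym lmat = "complex fls ^ 2 ^ 2"

definition laurent_poly :: "lpoly \<Rightarrow> bool" where
  "laurent_poly u \<longleftrightarrow> finite {k. fls_nth u k \<noteq> 0}"

definition lmatrix :: "lmat \<Rightarrow> bool" where
  "lmatrix P \<longleftrightarrow> (\<forall>j k. laurent_poly (P $ j $ k))"

text \<open>u(z^{-1}) and the star of a scalar Laurent polynomial (meaningful for Laurent polynomials).\<close>
definition lp_refl :: "lpoly \<Rightarrow> lpoly" where
  "lp_refl u = Abs_fls (\<lambda>k. fls_nth u (- k))"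

definition lp_star :: "lpoly \<Rightarrow> lpoly" where
  "lp_star u = Abs_fls (\<lambda>k. cnj (fls_nth u (- k)))"

definition mstar :: "lmat \<Rightarrow> lmat" where
  "mstar P = (\<chi> j k. lp_star (P $ k $ j))"

text \<open>A type  e z^c  is encoded as the pair (e, c) with e \<in> {1,-1}.\<close>
type_synonym symtype = "int \<times> int"

definition valid_type :: "symtype \<Rightarrow> bool" where
  "valid_type t \<longleftrightarrow> fst t \<in> {1, -1}"

definition type_mul :: "symtype \<Rightarrow> symtype \<Rightarrow> symtype" where
  "type_mul s t = (fst s * fst t, snd s + snd t)"

definition type_inv :: "symtype \<Rightarrow> symtype" where
  "type_inv t = (fst t, - snd t)"

definition type_star :: "symtype \<Rightarrow> symtype" where
  "type_star t = (fst t, - snd t)"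

definition has_sym_type :: "lpoly \<Rightarrow> symtype \<Rightarrow> bool" where
  "has_sym_type u t \<longleftrightarrow>
     u = fls_const (of_int (fst t)) * fls_X_intpow (snd t) * lp_refl u"

definition compatible_sym :: "lmat \<Rightarrow> bool" where
  "compatible_sym P \<longleftrightarrow> (\<exists>\<tau> \<rho> :: 2 \<Rightarrow> symtype.
     (\<forall>j. valid_type (\<tau> j)) \<and> (\<forall>k. valid_type (\<rho> k)) \<and>
     (\<forall>j k. has_sym_type (P $ j $ k) (type_mul (type_inv (\<tau> j)) (\<rho> k))))"

definition compatible_product :: "lmat list \<Rightarrow> bool" where
  "compatible_product Ps \<longleftrightarrow> (\<exists>\<tau>s :: (2 \<Rightarrow> symtype) list.
     length \<tau>s = length Ps + 1 \<and>
     (\<forall>i < length \<tau>s. \<forall>j. valid_type ((\<tau>s ! i) j)) \<and>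
     (\<forall>i < length Ps. \<forall>j k.
        has_sym_type ((Ps ! i) $ j $ k) (type_mul (type_inv ((\<tau>s ! i) j)) ((\<tau>s ! (i + 1)) k))))"

definition mat_prod_list :: "lmat list \<Rightarrow> lmat" where
  "mat_prod_list Ps = foldr (\<lambda>P Q. P ** Q) Ps (mat 1)"

definition strongly_invertible :: "lmat \<Rightarrow> bool" where
  "strongly_invertible V \<longleftrightarrow> (\<exists>c m. c \<noteq> 0 \<and> det V = fls_const c * fls_X_intpow m)"

definition hermitian_l :: "lmat \<Rightarrow> bool" where
  "hermitian_l P \<longleftrightarrow> mstar P = P"

end

theory Submission
  imports Defs
begin

notation fls_nth (infixl \<open>$$\<close> 75)

lemma lp_fin: "laurent_poly u \<Longrightarrow> finite {k. u $$ k \<noteq> 0}"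
  by (simp add: laurent_poly_def)

lemma lp_refl_nth: assumes "laurent_poly u" shows "lp_refl u $$ k = u $$ (- k)"
proof -
  have "finite (int -` {k. u $$ k \<noteq> 0})"
    by (rule finite_vimageI) (use assms in \<open>auto simp: laurent_poly_def\<close>)
  hence "\<forall>\<^sub>\<infinity> n::nat. u $$ (int n) = 0"
    by (simp add: MOST_iff_cofinite vimage_def)
  hence "(\<lambda>k. u $$ (- k)) \<in> {f::int \<Rightarrow> complex. \<forall>\<^sub>\<infinity> n::nat. f (- int n) = 0}" by simp
  thus ?thesis unfolding lp_refl_def by (simp add: Abs_fls_inverse)
qed

lemma lp_star_nth: assumes "laurent_poly u" shows "lp_star u $$ k = cnj (u $$ (- k))"
proof -
  have "finite (int -` {k. u $$ k \<noteq> 0})"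
    by (rule finite_vimageI) (use assms in \<open>auto simp: laurent_poly_def\<close>)
  hence "\<forall>\<^sub>\<infinity> n::nat. u $$ (int n) = 0"
    by (simp add: MOST_iff_cofinite vimage_def)
  hence "(\<lambda>k. cnj (u $$ (- k))) \<in> {f::int \<Rightarrow> complex. \<forall>\<^sub>\<infinity> n::nat. f (- int n) = 0}" by simp
  thus ?thesis unfolding lp_star_def by (simp add: Abs_fls_inverse)
qed

lemma fls_times_nth_fin:
  fixes f g :: "complex fls"
  assumes "finite S" "\<And>i. f $$ i \<noteq> 0 \<Longrightarrow> i \<in> S"
  shows "(f * g) $$ n = (\<Sum>i\<in>S. f $$ i * g $$ (n - i))"
proof -
  have "(f * g) $$ n = (\<Sum>i=fls_subdegree f..n - fls_subdegree g. f $$ i * g $$ (n - i))"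
    by (rule fls_times_nth(2))
  also have "\<dots> = (\<Sum>i\<in>S \<union> {fls_subdegree f..n - fls_subdegree g}. f $$ i * g $$ (n - i))"
    by (rule sum.mono_neutral_left) (use assms in \<open>auto simp: not_less\<close>)
  also have "\<dots> = (\<Sum>i\<in>S. f $$ i * g $$ (n - i))"
  proof (rule sum.mono_neutral_right)
    show "\<forall>i\<in>S \<union> {fls_subdegree f..n - fls_subdegree g} - S. f $$ i * g $$ (n - i) = 0"
    proof
      fix i assume i: "i \<in> S \<union> {fls_subdegree f..n - fls_subdegree g} - S"
      show "f $$ i * g $$ (n - i) = 0" using assms(2)[of i] i by auto
    qed
  qed (use assms in auto)
  finally show ?thesis .
qed


lemma lp_iff: "laurent_poly u \<longleftrightarrow> finite {k. u $$ k \<noteq> 0}"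
  by (simp add: laurent_poly_def)

lemma lp_0[simp]: "laurent_poly 0" by (simp add: lp_iff)
lemma lp_1[simp]: "laurent_poly 1" by (simp add: lp_iff)
lemma lp_const[simp]: "laurent_poly (fls_const c)"
  by (simp add: lp_iff)
lemma lp_X[simp]: "laurent_poly (fls_X_intpow j :: complex fls)"
proof -
  have "{k. (fls_X_intpow j :: complex fls) $$ k \<noteq> 0} \<subseteq> {j}" by auto
  thus ?thesis unfolding lp_iff using finite_subset by blast
qed
lemma lp_add[simp]: "laurent_poly u \<Longrightarrow> laurent_poly v \<Longrightarrow> laurent_poly (u + v)"
  unfolding lp_iff by (rule finite_subset[of _ "{k. u $$ k \<noteq> 0} \<union> {k. v $$ k \<noteq> 0}"]) auto
lemma lp_uminus[simp]: "laurent_poly u \<Longrightarrow> laurent_poly (- u)"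
  unfolding lp_iff by simp
lemma lp_diff[simp]: "laurent_poly u \<Longrightarrow> laurent_poly v \<Longrightarrow> laurent_poly (u - v)"
  unfolding lp_iff by (rule finite_subset[of _ "{k. u $$ k \<noteq> 0} \<union> {k. v $$ k \<noteq> 0}"]) auto
lemma lp_mult[simp]: assumes "laurent_poly u" "laurent_poly v" shows "laurent_poly (u * v)"
proof -
  let ?S = "{k. u $$ k \<noteq> 0}" and ?T = "{k. v $$ k \<noteq> 0}"
  have "{k. fls_nth (u * v) k \<noteq> 0} \<subseteq> (\<lambda>(i,j). i + j) ` (?S \<times> ?T)"
  proof
    fix n assume "n \<in> {k. fls_nth (u * v) k \<noteq> 0}"
    hence "(\<Sum>i\<in>?S. u $$ i * v $$ (n - i)) \<noteq> 0"
      using fls_times_nth_fin[of ?S u v n] assms by (simp add: lp_iff)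
    hence "\<exists>i\<in>?S. u $$ i * v $$ (n - i) \<noteq> 0"
      by (meson sum.neutral)
    then obtain i where "i \<in> ?S" "u $$ i * v $$ (n - i) \<noteq> 0" by blast
    thus "n \<in> (\<lambda>(i,j). i + j) ` (?S \<times> ?T)"
      by (auto intro!: image_eqI[of _ _ "(i, n - i)"])
  qed
  moreover have "finite ((\<lambda>(i,j). i + j) ` (?S \<times> ?T))" using assms by (simp add: lp_iff)
  ultimately show ?thesis unfolding lp_iff using finite_subset by blast
qed
lemma lp_refl[simp]: "laurent_poly u \<Longrightarrow> laurent_poly (lp_refl u)"
proof -
  assume u: "laurent_poly u"
  have "{k. lp_refl u $$ k \<noteq> 0} = uminus ` {k. u $$ k \<noteq> 0}"
    by (auto simp: lp_refl_nth[OF u] image_iff) (metis minus_minus)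
  thus ?thesis using u by (simp add: lp_iff)
qed
lemma lp_star[simp]: "laurent_poly u \<Longrightarrow> laurent_poly (lp_star u)"
proof -
  assume u: "laurent_poly u"
  have "{k. lp_star u $$ k \<noteq> 0} = uminus ` {k. u $$ k \<noteq> 0}"
    by (auto simp: lp_star_nth[OF u] image_iff) (metis minus_minus)
  thus ?thesis using u by (simp add: lp_iff)
qed

lemma uminus_img: "u $$ (- i) \<noteq> 0 \<Longrightarrow> i \<in> uminus ` {k. u $$ k \<noteq> 0}"
  by (rule image_eqI[of _ _ "- i"]) auto

lemma refl_mult: assumes "laurent_poly u" "laurent_poly v"
  shows "lp_refl (u * v) = lp_refl u * lp_refl v"
proof (rule fls_eqI)
  fix n
  let ?S = "{k. u $$ k \<noteq> 0}"
  have fS: "finite ?S" using assms by (simp add: lp_iff)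
  have "lp_refl (u * v) $$ n = (\<Sum>i\<in>?S. u $$ i * v $$ (- n - i))"
    using assms by (simp add: lp_refl_nth fls_times_nth_fin[OF fS])
  also have "\<dots> = (\<Sum>i\<in>uminus ` ?S. u $$ (- i) * v $$ (i - n))"
  proof -
    have "(\<Sum>i\<in>uminus ` ?S. u $$ (- i) * v $$ (i - n)) = (\<Sum>i\<in>?S. (\<lambda>i. u $$ (- i) * v $$ (i - n)) (- i))"
      by (rule sum.reindex_cong[where l=uminus]) (auto simp: inj_on_def)
    also have "\<dots> = (\<Sum>i\<in>?S. u $$ i * v $$ (- n - i))"
      by (intro sum.cong refl arg_cong2[where f="(*)"] arg_cong[where f="fls_nth v"] arg_cong[where f=cnj]) auto
    finally show ?thesis by simp
  qed
  also have "\<dots> = (\<Sum>i\<in>uminus ` ?S. lp_refl u $$ i * lp_refl v $$ (n - i))"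
    using assms by (simp add: lp_refl_nth)
  also have "\<dots> = (lp_refl u * lp_refl v) $$ n"
    by (rule fls_times_nth_fin[symmetric]) (use fS assms in \<open>simp_all add: lp_refl_nth uminus_img\<close>)
  finally show "lp_refl (u * v) $$ n = (lp_refl u * lp_refl v) $$ n" .
qed

lemma star_mult: assumes "laurent_poly u" "laurent_poly v"
  shows "lp_star (u * v) = lp_star u * lp_star v"
proof (rule fls_eqI)
  fix n
  let ?S = "{k. u $$ k \<noteq> 0}"
  have fS: "finite ?S" using assms by (simp add: lp_iff)
  have "lp_star (u * v) $$ n = (\<Sum>i\<in>?S. cnj (u $$ i) * cnj (v $$ (- n - i)))"
    using assms by (simp add: lp_star_nth fls_times_nth_fin[OF fS])
  also have "\<dots> = (\<Sum>i\<in>uminus ` ?S. cnj (u $$ (- i)) * cnj (v $$ (i - n)))"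
  proof -
    have "(\<Sum>i\<in>uminus ` ?S. cnj (u $$ (- i)) * cnj (v $$ (i - n))) = (\<Sum>i\<in>?S. (\<lambda>i. cnj (u $$ (- i)) * cnj (v $$ (i - n))) (- i))"
      by (rule sum.reindex_cong[where l=uminus]) (auto simp: inj_on_def)
    also have "\<dots> = (\<Sum>i\<in>?S. cnj (u $$ i) * cnj (v $$ (- n - i)))"
      by (intro sum.cong refl arg_cong2[where f="(*)"] arg_cong[where f="fls_nth v"] arg_cong[where f=cnj]) auto
    finally show ?thesis by simp
  qed
  also have "\<dots> = (\<Sum>i\<in>uminus ` ?S. lp_star u $$ i * lp_star v $$ (n - i))"
    using assms by (simp add: lp_star_nth)
  also have "\<dots> = (lp_star u * lp_star v) $$ n"
    by (rule fls_times_nth_fin[symmetric]) (use fS assms in \<open>simp_all add: lp_star_nth uminus_img\<close>)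
  finally show "lp_star (u * v) $$ n = (lp_star u * lp_star v) $$ n" .
qed


lemma refl_add: "laurent_poly u \<Longrightarrow> laurent_poly v \<Longrightarrow> lp_refl (u + v) = lp_refl u + lp_refl v"
  by (rule fls_eqI) (simp add: lp_refl_nth)
lemma star_add: "laurent_poly u \<Longrightarrow> laurent_poly v \<Longrightarrow> lp_star (u + v) = lp_star u + lp_star v"
  by (rule fls_eqI) (simp add: lp_star_nth)
lemma star_star: "laurent_poly u \<Longrightarrow> lp_star (lp_star u) = u"
  by (rule fls_eqI) (simp add: lp_star_nth)
lemma star_0[simp]: "lp_star 0 = 0"
  by (rule fls_eqI) (simp add: lp_star_nth)
lemma star_1[simp]: "lp_star 1 = 1"
  by (rule fls_eqI) (simp add: lp_star_nth[OF lp_1])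

lemma sym_nth_expr: assumes "laurent_poly u"
  shows "(fls_const (of_int e) * fls_X_intpow c * lp_refl u) $$ k = of_int e * u $$ (c - k)"
proof -
  have "fls_const (of_int e) * fls_X_intpow c * lp_refl u = fls_const (of_int e) * (fls_X_intpow c * lp_refl u)"
    by (simp only: mult.assoc)
  also have "fls_X_intpow c * lp_refl u = fls_shift (- c) (lp_refl u)"
    by (rule fls_X_intpow_times_conv_shift(1))
  finally have "(fls_const (of_int e) * fls_X_intpow c * lp_refl u) $$ k = of_int e * (fls_shift (- c) (lp_refl u)) $$ k"
    by (simp only: fls_mult_const_nth)
  also have "\<dots> = of_int e * u $$ (c - k)"
    by (simp only: fls_shift_nth lp_refl_nth[OF assms]) simp
  finally show ?thesis .
qed

lemma sym_iff: assumes "laurent_poly u"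
  shows "has_sym_type u (e, c) \<longleftrightarrow> (\<forall>k. u $$ k = of_int e * u $$ (c - k))"
  unfolding has_sym_type_def fls_eq_iff fst_conv snd_conv sym_nth_expr[OF assms] ..

lemma sym_nth: assumes "laurent_poly u" "has_sym_type u (e,c)" shows "u $$ k = of_int e * u $$ (c-k)"
  using sym_iff[OF assms(1), THEN iffD1, OF assms(2)] by (rule spec)
lemma sym_intro: assumes "laurent_poly u" "\<And>k. u $$ k = of_int e * u $$ (c-k)" shows "has_sym_type u (e,c)"
  using assms(2) by (intro sym_iff[OF assms(1), THEN iffD2] allI)

lemma sym_add: assumes "laurent_poly u" "laurent_poly v" "has_sym_type u t" "has_sym_type v t"
  shows "has_sym_type (u + v) t"
proof -
  obtain e c where t: "t = (e, c)" by (cases t)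
  show ?thesis unfolding t
  proof (rule sym_intro)
    fix k
    show "(u + v) $$ k = of_int e * (u + v) $$ (c - k)"
      using sym_nth[OF assms(1), of e c k] sym_nth[OF assms(2), of e c k] assms(3,4) t
      by (simp add: distrib_left)
  qed (use assms in simp)
qed

lemma sym_0[simp]: "has_sym_type 0 t"
  by (cases t) (simp add: sym_iff)

lemma sym_1: "has_sym_type 1 (1, 0)"
  by (simp add: sym_iff)

lemma sym_star: assumes "laurent_poly u" "e \<in> {1, -1}" "has_sym_type u (e, c)"
  shows "has_sym_type (lp_star u) (e, - c)"
proof (rule sym_intro)
  fix k
  have "u $$ (- k) = of_int e * u $$ (c + k)" using sym_nth[OF assms(1,3), of "- k"] by simp
  thus "lp_star u $$ k = of_int e * lp_star u $$ (- c - k)"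
    using assms(1) by (simp add: lp_star_nth add.commute)
qed (use assms in simp)
lemma sym_mult:
  assumes lu: "laurent_poly u" and lv: "laurent_poly v"
    and hu: "has_sym_type u (e1, c1)" and hv: "has_sym_type v (e2, c2)"
  shows "has_sym_type (u * v) (type_mul (e1, c1) (e2, c2))"
proof -
  have u: "u = fls_const (of_int e1) * fls_X_intpow c1 * lp_refl u" using hu by (simp add: has_sym_type_def)
  have v: "v = fls_const (of_int e2) * fls_X_intpow c2 * lp_refl v" using hv by (simp add: has_sym_type_def)
  have "u * v = (fls_const (of_int e1) * fls_X_intpow c1 * lp_refl u) * (fls_const (of_int e2) * fls_X_intpow c2 * lp_refl v)"
    using arg_cong2[where f="(*)", OF u v] .
  also have "\<dots> = (fls_const (of_int e1) * fls_const (of_int e2)) * (fls_X_intpow c1 * fls_X_intpow c2) * (lp_refl u * lp_refl v)"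
    by (simp only: mult_ac)
  also have "\<dots> = fls_const (of_int (e1 * e2)) * fls_X_intpow (c1 + c2) * lp_refl (u * v)"
    by (simp only: fls_const_mult_const of_int_mult fls_X_intpow_times_fls_X_intpow refl_mult[OF lu lv])
  finally show ?thesis unfolding has_sym_type_def type_mul_def fst_conv snd_conv .
qed

definition hi :: "lpoly \<Rightarrow> int" where "hi u = Max {k. u $$ k \<noteq> 0}"

lemma hi_nz: assumes "laurent_poly u" "u \<noteq> 0" shows "u $$ hi u \<noteq> 0"
proof -
  have "{k. u $$ k \<noteq> 0} \<noteq> {}" using assms(2) by (auto simp: fls_eq_iff)
  hence "hi u \<in> {k. u $$ k \<noteq> 0}" unfolding hi_def using assms(1) by (intro Max_in) (auto simp: lp_iff)
  thus ?thesis by simp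
qed

lemma hi_ge: assumes "laurent_poly u" "u $$ k \<noteq> 0" shows "k \<le> hi u"
  unfolding hi_def using assms by (intro Max_ge) (auto simp: lp_iff)

lemma hi_zero: assumes "laurent_poly u" "hi u < k" shows "u $$ k = 0"
  using hi_ge[OF assms(1)] assms(2) by force

lemma hi_sym_ge: assumes "laurent_poly b" "b \<noteq> 0" "has_sym_type b (e, c)" "e \<in> {1, -1}"
  shows "c \<le> 2 * hi b"
proof -
  have "b $$ (hi b) = of_int e * b $$ (c - hi b)" using sym_nth[OF assms(1,3)] .
  hence "b $$ (c - hi b) \<noteq> 0" using hi_nz[OF assms(1,2)] by auto
  hence "c - hi b \<le> hi b" by (rule hi_ge[OF assms(1)])
  thus ?thesis by simp
qed
lemma sym0_nth: assumes "laurent_poly a" "has_sym_type a (1, 0)" shows "a $$ k = a $$ (- k)"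
  using sym_nth[OF assms, of k] by simp

lemma lo_sym0: assumes "laurent_poly a" "a \<noteq> 0" "has_sym_type a (1, 0)"
  shows "fls_subdegree a = - hi a"
proof (rule antisym)
  have "a $$ (- hi a) \<noteq> 0" using hi_nz[OF assms(1,2)] sym0_nth[OF assms(1,3), of "- hi a"] by simp
  thus "fls_subdegree a \<le> - hi a" by (rule fls_subdegree_leI)
  show "- hi a \<le> fls_subdegree a"
  proof (rule fls_subdegree_geI[OF assms(2)])
    fix k assume "k < - hi a"
    hence "a $$ (- k) = 0" by (intro hi_zero[OF assms(1)]) simp
    thus "a $$ k = 0" using sym0_nth[OF assms(1,3), of k] by simp
  qed
qed

lemma deg_ineq:
  assumes la: "laurent_poly a" and lb: "laurent_poly b" and ld: "laurent_poly d"
    and a0: "a \<noteq> 0" and b0: "b \<noteq> 0" and d0: "d \<noteq> 0"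
    and sa: "has_sym_type a (1, 0)" and sd: "has_sym_type d (1, 0)"
    and sb: "has_sym_type b (e, c)" and e: "e \<in> {1, -1}"
    and det: "a * d - b * lp_star b = fls_const K"
  shows "hi a + hi d \<le> 2 * hi b - c"
proof (rule ccontr)
  assume "\<not> ?thesis"
  hence lt: "2 * hi b - c < hi a + hi d" by simp
  have cb: "c \<le> 2 * hi b" by (rule hi_sym_ge[OF lb b0 sb e])
  define N where "N = - (hi a + hi d)"
  have N0: "N \<noteq> 0" and N1: "N < c - 2 * hi b" using lt cb by (auto simp: N_def)
  have "(a * d) $$ N \<noteq> 0"
  proof -
    have "N = fls_subdegree a + fls_subdegree d"
      using lo_sym0[OF la a0 sa] lo_sym0[OF ld d0 sd] by (simp add: N_def)
    thus ?thesis using a0 d0 by (simp add: fls_times_base)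
  qed
  moreover have "(a * d) $$ N = 0"
  proof -
    have lob: "c - hi b \<le> fls_subdegree b"
    proof (rule fls_subdegree_geI[OF b0])
      fix k assume "k < c - hi b"
      hence "b $$ (c - k) = 0" by (intro hi_zero[OF lb]) simp
      thus "b $$ k = 0" using sym_nth[OF lb sb, of k] by simp
    qed
    have s0: "lp_star b \<noteq> 0"
      using hi_nz[OF lb b0] by (intro fls_nonzeroI[of _ "- hi b"]) (simp add: lp_star_nth[OF lb])
    have los: "- hi b \<le> fls_subdegree (lp_star b)"
    proof (rule fls_subdegree_geI[OF s0])
      fix k assume "k < - hi b"
      hence "b $$ (- k) = 0" by (intro hi_zero[OF lb]) simp
      thus "lp_star b $$ k = 0" by (simp add: lp_star_nth[OF lb])
    qed
    have "(b * lp_star b) $$ N = 0"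
      using lob los N1 by (intro fls_times_nth_eq0) simp
    moreover have "a * d = fls_const K + b * lp_star b" using det by (simp add: algebra_simps)
    ultimately show ?thesis using N0 by simp
  qed
  ultimately show False by simp
qed

lemma mono_nth: "(fls_const t * fls_X_intpow j :: complex fls) $$ k = (if k = j then t else 0)"
  by simp

lemma reduce:
  assumes la: "laurent_poly a" and lb: "laurent_poly b" and a0: "a \<noteq> 0" and b0: "b \<noteq> 0"
    and sa: "has_sym_type a (1, 0)" and sb: "has_sym_type b (e, c)" and e: "e \<in> {1, -1}"
    and par: "odd c \<or> e = 1" and deg: "2 * hi a \<le> 2 * hi b - c"
  shows "\<exists>r. laurent_poly r \<and> has_sym_type r (e, c) \<and> (b + a * r = 0 \<or> hi (b + a * r) < hi b)"
proof -
  define n where "n = hi a"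
  define h where "h = hi b"
  define j where "j = h - n"
  define t where "t = - (b $$ h / a $$ n)"
  define r where "r = (if c - j = j then fls_const t * fls_X_intpow j
      else fls_const t * fls_X_intpow j + fls_const (of_int e * t) * fls_X_intpow (c - j))"
  have cj: "c - j \<le> j" using deg by (simp add: j_def n_def h_def)
  have rnth: "\<And>k. r $$ k = (if k = j then t else 0) + (if k = c - j \<and> c - j \<noteq> j then of_int e * t else 0)"
    by (simp add: r_def)
  have "laurent_poly (fls_shift m (1::complex fls))" for m using lp_X[of "- m"] by simp
  hence lr: "laurent_poly r" by (simp add: r_def)
  have rz: "\<And>k. j < k \<Longrightarrow> r $$ k = 0" using cj by (simp add: rnth)
  have rj: "r $$ j = t" by (simp add: rnth)
  have sr: "has_sym_type r (e, c)"
  proof (rule sym_intro[OF lr])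
    fix k
    show "r $$ k = of_int e * r $$ (c - k)"
    proof (cases "c - j = j")
      case True
      hence "e = 1" using par by presburger
      thus ?thesis using True by (simp add: rnth)
    next
      case False
      thus ?thesis using e by (auto simp: rnth)
    qed
  qed
  have an: "a $$ n \<noteq> 0" unfolding n_def by (rule hi_nz[OF la a0])
  have bh: "b $$ h \<noteq> 0" unfolding h_def by (rule hi_nz[OF lb b0])
  have ar: "(a * r) $$ k = a $$ n * r $$ (k - n)" if k: "h \<le> k" for k
  proof -
    let ?S = "{i. a $$ i \<noteq> 0}"
    have fS: "finite ?S" using la by (simp add: lp_iff)
    have "(a * r) $$ k = (\<Sum>i\<in>?S. a $$ i * r $$ (k - i))"
      by (rule fls_times_nth_fin[OF fS]) simp
    also have "\<dots> = (\<Sum>i\<in>?S. if i = n then a $$ n * r $$ (k - n) else 0)"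
    proof (rule sum.cong[OF refl])
      fix i assume i: "i \<in> ?S"
      hence "i \<le> n" unfolding n_def by (intro hi_ge[OF la]) simp
      moreover have "i < n \<Longrightarrow> r $$ (k - i) = 0" using k by (intro rz) (simp add: j_def)
      ultimately show "a $$ i * r $$ (k - i) = (if i = n then a $$ n * r $$ (k - n) else 0)"
        by (cases "i = n") auto
    qed
    also have "\<dots> = a $$ n * r $$ (k - n)" using fS an by (simp add: sum.delta)
    finally show ?thesis .
  qed
  have top: "(b + a * r) $$ k = 0" if k: "h \<le> k" for k
  proof (cases "k = h")
    case True
    have hn: "h - n = j" by (simp add: j_def)
    thus ?thesis using ar[OF k] an True by (simp add: hn rj t_def)
  next
    case False
    hence "h < k" using k by simp
    hence "b $$ k = 0" "r $$ (k - n) = 0" unfolding h_def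
      by (auto intro!: hi_zero[OF lb] rz simp: j_def h_def)
    thus ?thesis using ar[OF k] by simp
  qed
  have "b + a * r = 0 \<or> hi (b + a * r) < hi b"
  proof (cases "b + a * r = 0")
    case False
    hence "(b + a * r) $$ hi (b + a * r) \<noteq> 0" using la lb lr by (intro hi_nz) simp_all
    hence "\<not> h \<le> hi (b + a * r)" using top[of "hi (b + a * r)"] by blast
    thus ?thesis by (simp add: h_def)
  qed simp
  thus ?thesis using lr sr by blast
qed

lemma two_ne[simp]: "(1::2) \<noteq> 2" "(2::2) \<noteq> 1" by simp_all

definition tau :: "symtype \<Rightarrow> 2 \<Rightarrow> symtype" where
  "tau \<alpha> i = (if i = 1 then (1, 0) else \<alpha>)"

definition typed :: "symtype \<Rightarrow> lmat \<Rightarrow> bool" where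
  "typed \<alpha> M \<longleftrightarrow> (\<forall>j k. has_sym_type (M $ j $ k) (type_mul (type_inv (tau \<alpha> j)) (tau \<alpha> k)))"

lemma typed_iff: assumes e: "e \<in> {1, -1}"
  shows "typed (e, c) M \<longleftrightarrow> has_sym_type (M$1$1) (1, 0) \<and> has_sym_type (M$1$2) (e, c)
     \<and> has_sym_type (M$2$1) (e, - c) \<and> has_sym_type (M$2$2) (1, 0)"
proof -
  have ee: "e * e = 1" using e by auto
  show ?thesis unfolding typed_def forall_2 tau_def type_mul_def type_inv_def
    by (simp add: ee)
qed

lemma mm_entry: "((P::lmat) ** Q) $ i $ j = P$i$1 * Q$1$j + P$i$2 * Q$2$j"
  by (simp add: matrix_matrix_mult_def sum_2)

lemma mstar_entry[simp]: "mstar P $ i $ j = lp_star (P $ j $ i)"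
  by (simp add: mstar_def)

lemma lmatrix_iff: "lmatrix P \<longleftrightarrow> laurent_poly (P$1$1) \<and> laurent_poly (P$1$2) \<and> laurent_poly (P$2$1) \<and> laurent_poly (P$2$2)"
  unfolding lmatrix_def forall_2 by simp

lemma lmatrix_mult: "lmatrix P \<Longrightarrow> lmatrix Q \<Longrightarrow> lmatrix (P ** Q)"
  unfolding lmatrix_iff by (simp add: mm_entry)

lemma lmatrix_mstar: "lmatrix P \<Longrightarrow> lmatrix (mstar P)"
  unfolding lmatrix_iff by simp

lemma sm: "laurent_poly u \<Longrightarrow> laurent_poly v \<Longrightarrow> has_sym_type u s \<Longrightarrow> has_sym_type v t
   \<Longrightarrow> type_mul s t = w \<Longrightarrow> has_sym_type (u * v) w"
  using sym_mult[of u v "fst s" "snd s" "fst t" "snd t"] by auto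

lemma typed_mult: assumes e: "e \<in> {1, -1}" and l: "lmatrix P" "lmatrix Q"
  and t: "typed (e, c) P" "typed (e, c) Q"
  shows "typed (e, c) (P ** Q)"
proof -
  have ee: "e * e = 1" using e by auto
  note L = l[unfolded lmatrix_iff] and T = t[unfolded typed_iff[OF e]]
  have "has_sym_type (P$1$1 * Q$1$1 + P$1$2 * Q$2$1) (1, 0)"
    by (rule sym_add[OF _ _ sm[of "P$1$1" "Q$1$1" "(1, 0)" "(1, 0)"] sm[of "P$1$2" "Q$2$1" "(e, c)" "(e, - c)"]])
      (use L T in \<open>simp_all add: type_mul_def ee\<close>)
  moreover
  have "has_sym_type (P$1$1 * Q$1$2 + P$1$2 * Q$2$2) (e, c)"
    by (rule sym_add[OF _ _ sm[of "P$1$1" "Q$1$2" "(1, 0)" "(e, c)"] sm[of "P$1$2" "Q$2$2" "(e, c)" "(1, 0)"]])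
      (use L T in \<open>simp_all add: type_mul_def ee\<close>)
  moreover
  have "has_sym_type (P$2$1 * Q$1$1 + P$2$2 * Q$2$1) (e, - c)"
    by (rule sym_add[OF _ _ sm[of "P$2$1" "Q$1$1" "(e, - c)" "(1, 0)"] sm[of "P$2$2" "Q$2$1" "(1, 0)" "(e, - c)"]])
      (use L T in \<open>simp_all add: type_mul_def ee\<close>)
  moreover
  have "has_sym_type (P$2$1 * Q$1$2 + P$2$2 * Q$2$2) (1, 0)"
    by (rule sym_add[OF _ _ sm[of "P$2$1" "Q$1$2" "(e, - c)" "(e, c)"] sm[of "P$2$2" "Q$2$2" "(1, 0)" "(1, 0)"]])
      (use L T in \<open>simp_all add: type_mul_def ee\<close>)
  ultimately show ?thesis unfolding typed_iff[OF e] mm_entry by blast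
qed

lemma typed_mstar: assumes e: "e \<in> {1, -1}" and l: "lmatrix P" and t: "typed (e, c) P"
  shows "typed (e, c) (mstar P)"
proof -
  note L = l[unfolded lmatrix_iff] and T = t[unfolded typed_iff[OF e]]
  have o: "(1::int) \<in> {1, -1}" by simp
  show ?thesis unfolding typed_iff[OF e] mstar_entry
    using sym_star[OF _ o, of "P$1$1" 0] sym_star[OF _ o, of "P$2$2" 0]
      sym_star[OF _ e, of "P$2$1" "- c"] sym_star[OF _ e, of "P$1$2" c] L T
    by simp
qed

lemma mstar_mult: assumes "lmatrix P" "lmatrix Q" shows "mstar (P ** Q) = mstar Q ** mstar P"
  using assms unfolding lmatrix_iff
  by (simp add: vec_eq_iff forall_2 mm_entry star_add star_mult mult.commute)

lemma mstar_mstar: "lmatrix P \<Longrightarrow> mstar (mstar P) = P"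
  unfolding lmatrix_iff by (simp add: vec_eq_iff forall_2 star_star)


definition elow :: "lpoly \<Rightarrow> lmat" where "elow p = vector [vector [1, 0], vector [p, 1]]"
definition eup :: "lpoly \<Rightarrow> lmat" where "eup p = vector [vector [1, p], vector [0, 1]]"

lemma elow_entries[simp]: "elow p $ 1 $ 1 = 1" "elow p $ 1 $ 2 = 0" "elow p $ 2 $ 1 = p" "elow p $ 2 $ 2 = 1"
  by (simp_all add: elow_def)
lemma eup_entries[simp]: "eup p $ 1 $ 1 = 1" "eup p $ 1 $ 2 = p" "eup p $ 2 $ 1 = 0" "eup p $ 2 $ 2 = 1"
  by (simp_all add: eup_def)

definition minv :: "int \<Rightarrow> int \<Rightarrow> complex \<Rightarrow> lmat \<Rightarrow> bool" where
  "minv e c C A \<longleftrightarrow> lmatrix A \<and> hermitian_l A \<and> typed (e, c) A \<and> det A = fls_const C"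

lemma herm_entries: fixes A :: lmat assumes "hermitian_l A"
  shows "A$2$1 = lp_star (A$1$2)" "lp_star (A$1$1) = A$1$1" "lp_star (A$2$2) = A$2$2"
proof -
  have "mstar A = A" using assms by (simp add: hermitian_l_def)
  hence "\<And>i j. mstar A $ i $ j = A $ i $ j" by simp
  thus "A$2$1 = lp_star (A$1$2)" "lp_star (A$1$1) = A$1$1" "lp_star (A$2$2) = A$2$2"
    by (metis mstar_entry)+
qed

lemma conj_step:
  fixes A E :: lmat
  assumes e: "e \<in> {1, -1}" and lE: "lmatrix E" and tE: "typed (e, c) E" and dE: "det E = 1"
    and dE': "det (mstar E) = 1" and A: "minv e c C A"
  shows "minv e c C (E ** A ** mstar E)"
proof -
  have lA: "lmatrix A" and hA: "mstar A = A" and tA: "typed (e, c) A" and dA: "det A = fls_const C"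
    using A by (auto simp: minv_def hermitian_l_def)
  have l1: "lmatrix (E ** A)" by (rule lmatrix_mult[OF lE lA])
  have l2: "lmatrix (mstar E)" by (rule lmatrix_mstar[OF lE])
  have "lmatrix (E ** A ** mstar E)" by (rule lmatrix_mult[OF l1 l2])
  moreover have "typed (e, c) (E ** A ** mstar E)"
    by (intro typed_mult[OF e] typed_mstar[OF e] lmatrix_mult lmatrix_mstar lE lA tE tA)
  moreover have "mstar (E ** A ** mstar E) = E ** A ** mstar E"
    by (simp add: mstar_mult[OF l1 l2] mstar_mult[OF lE lA] mstar_mstar[OF lE] hA matrix_mul_assoc)
  moreover have "det (E ** A ** mstar E) = fls_const C"
    by (simp add: det_mul dE dE' dA)
  ultimately show ?thesis by (simp add: minv_def hermitian_l_def)
qed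

definition mu :: "int \<Rightarrow> lmat \<Rightarrow> nat" where
  "mu c (A::lmat) = (if A$1$2 = 0 then 0 else nat (2 * hi (A$1$2) - c) + 1)"

lemma step:
  fixes A :: lmat
  assumes e: "e \<in> {1, -1}" and par: "odd c \<or> e = 1" and A: "minv e c C A"
    and a0: "A$1$1 \<noteq> 0" and b0: "A$1$2 \<noteq> 0" and d0: "A$2$2 \<noteq> 0"
  shows "\<exists>E. lmatrix E \<and> typed (e, c) E \<and> det E = 1 \<and> det (mstar E) = 1 \<and>
     ((E ** A ** mstar E)$1$2 = 0 \<or> hi ((E ** A ** mstar E)$1$2) < hi (A$1$2))"
proof -
  define a where "a = A$1$1"
  define b where "b = A$1$2"
  define d where "d = A$2$2"
  have lA: "lmatrix A" and hA: "hermitian_l A" and tA: "typed (e, c) A" and dA: "det A = fls_const C"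
    using A by (auto simp: minv_def)
  have la: "laurent_poly a" and lb: "laurent_poly b" and ld: "laurent_poly d"
    using lA by (simp_all add: lmatrix_iff a_def b_def d_def)
  have sa: "has_sym_type a (1, 0)" and sb: "has_sym_type b (e, c)" and sd: "has_sym_type d (1, 0)"
    using tA by (simp_all add: typed_iff[OF e] a_def b_def d_def)
  have A21: "A$2$1 = lp_star b" and sta: "lp_star a = a" and std: "lp_star d = d"
    using herm_entries[OF hA] by (simp_all add: a_def b_def d_def)
  have "a * d - b * lp_star b = fls_const C"
    using dA by (simp add: det_2 a_def b_def d_def A21[unfolded b_def])
  hence deg: "hi a + hi d \<le> 2 * hi b - c"
    using deg_ineq[OF la lb ld _ _ _ sa sd sb e] a0 b0 d0 by (simp add: a_def b_def d_def)
  show ?thesis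
  proof (cases "2 * hi a \<le> 2 * hi b - c")
    case True
    obtain r where lr: "laurent_poly r" and sr: "has_sym_type r (e, c)"
      and red: "b + a * r = 0 \<or> hi (b + a * r) < hi b"
      using reduce[OF la lb _ _ sa sb e par True] a0 b0 by (auto simp: a_def b_def)
    define E where "E = elow (lp_star r)"
    have lE: "lmatrix E" using lr by (simp add: E_def lmatrix_iff)
    have tE: "typed (e, c) E"
      using sym_star[OF lr e sr] sym_1 by (simp add: E_def typed_iff[OF e])
    have dE: "det E = 1" by (simp add: E_def det_2)
    have dE': "det (mstar E) = 1" by (simp add: E_def det_2)
    have "(E ** A ** mstar E)$1$2 = b + a * r"
      by (simp add: mm_entry E_def star_star[OF lr] a_def b_def add.commute)
    thus ?thesis using lE tE dE dE' red by (auto simp: b_def)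
  next
    case False
    hence True': "2 * hi d \<le> 2 * hi b - c" using deg by simp
    obtain r where lr: "laurent_poly r" and sr: "has_sym_type r (e, c)"
      and red: "b + d * r = 0 \<or> hi (b + d * r) < hi b"
      using reduce[OF ld lb _ _ sd sb e par True'] d0 b0 by (auto simp: d_def b_def)
    define E where "E = eup r"
    have lE: "lmatrix E" using lr by (simp add: E_def lmatrix_iff)
    have tE: "typed (e, c) E"
      using sr sym_1 by (simp add: E_def typed_iff[OF e])
    have dE: "det E = 1" by (simp add: E_def det_2)
    have dE': "det (mstar E) = 1" by (simp add: E_def det_2)
    have "(E ** A ** mstar E)$1$2 = b + d * r"
      by (simp add: mm_entry E_def b_def d_def mult.commute)
    thus ?thesis using lE tE dE dE' red by (auto simp: b_def)
  qed
qed

lemma mpl_cons[simp]: "mat_prod_list (x # xs) = x ** mat_prod_list xs"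
  by (simp add: mat_prod_list_def)
lemma mpl_nil[simp]: "mat_prod_list [] = mat 1"
  by (simp add: mat_prod_list_def)
lemma mpl_append: "mat_prod_list (xs @ ys) = mat_prod_list xs ** mat_prod_list ys"
  by (induction xs) (simp_all add: matrix_mul_assoc)

lemma mat1_entry: "(mat 1 :: lmat) $ i $ j = (if i = j then 1 else 0)"
  by (simp add: mat_def)

lemma mstar_mat1: "mstar (mat 1 :: lmat) = mat 1"
  by (simp add: vec_eq_iff mat1_entry)

lemma lmatrix_mat1: "lmatrix (mat 1 :: lmat)"
  by (simp add: lmatrix_iff mat1_entry)

lemma typed_mat1: "e \<in> {1, -1} \<Longrightarrow> typed (e, c) (mat 1 :: lmat)"
  by (simp add: typed_iff mat1_entry sym_1)

lemma main:
  fixes A :: lmat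
  assumes e: "e \<in> {1, -1}" and par: "odd c \<or> e = 1" and A: "minv e c C A"
  shows "\<exists>Vs. Vs \<noteq> [] \<and> (\<forall>V\<in>set Vs. lmatrix V \<and> det V = 1 \<and> typed (e, c) V) \<and>
     (\<exists>j k. mat_prod_list (rev Vs @ [A] @ map mstar Vs) $ j $ k = 0)"
  using A
proof (induction "mu c A" arbitrary: A rule: less_induct)
  case less
  show ?case
  proof (cases "A$1$1 = 0 \<or> A$1$2 = 0 \<or> A$2$2 = 0")
    case True
    have "mat_prod_list (rev [mat 1] @ [A] @ map mstar [mat 1]) = A"
      by (simp add: mstar_mat1)
    hence "\<exists>j k. mat_prod_list (rev [mat 1] @ [A] @ map mstar [mat 1]) $ j $ k = 0"
      using True by metis
    thus ?thesis using lmatrix_mat1 typed_mat1[OF e] by (intro exI[of _ "[mat 1]"]) simp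
  next
    case False
    then obtain E where lE: "lmatrix E" and tE: "typed (e, c) E" and dE: "det E = 1"
      and dE': "det (mstar E) = 1"
      and red: "(E ** A ** mstar E)$1$2 = 0 \<or> hi ((E ** A ** mstar E)$1$2) < hi (A$1$2)"
      using step[OF e par less.prems] by blast
    define A' where "A' = E ** A ** mstar E"
    have A': "minv e c C A'" unfolding A'_def by (rule conj_step[OF e lE tE dE dE' less.prems])
    have "mu c A' < mu c A"
    proof (cases "A'$1$2 = 0")
      case True
      thus ?thesis using False by (simp add: mu_def)
    next
      case False': False
      have lb': "laurent_poly (A'$1$2)" using A' by (simp add: minv_def lmatrix_iff)
      have sb': "has_sym_type (A'$1$2) (e, c)" using A' by (simp add: minv_def typed_iff[OF e])
      have "c \<le> 2 * hi (A'$1$2)" by (rule hi_sym_ge[OF lb' False' sb' e])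
      moreover have "hi (A'$1$2) < hi (A$1$2)" using red False' by (simp add: A'_def)
      ultimately show ?thesis using False False' by (simp add: mu_def)
    qed
    from less.hyps[OF this A'] obtain Vs where Vs: "Vs \<noteq> []"
      "\<forall>V\<in>set Vs. lmatrix V \<and> det V = 1 \<and> typed (e, c) V"
      and z: "\<exists>j k. mat_prod_list (rev Vs @ [A'] @ map mstar Vs) $ j $ k = 0" by blast
    have "mat_prod_list (rev (E # Vs) @ [A] @ map mstar (E # Vs)) = mat_prod_list (rev Vs @ [A'] @ map mstar Vs)"
      by (simp add: mpl_append matrix_mul_assoc A'_def)
    thus ?thesis using Vs z lE dE tE by (intro exI[of _ "E # Vs"]) auto
  qed
qed

theorem lemma3p7:
  fixes A :: lmat and \<alpha> :: symtype and C :: real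
  assumes "lmatrix A"
    and "hermitian_l A"
    and "(\<exists>e k. e \<in> {1, -1} \<and> \<alpha> = (e, 2 * k + 1)) \<or> (\<exists>k. \<alpha> = (1, 2 * k))"
    and "has_sym_type (A $ 1 $ 1) (1, 0)"
    and "has_sym_type (A $ 1 $ 2) \<alpha>"
    and "has_sym_type (A $ 2 $ 1) (type_star \<alpha>)"
    and "has_sym_type (A $ 2 $ 2) (1, 0)"
    and "C < 0"
    and "det A = fls_const (complex_of_real C)"
  shows "\<exists>K::nat. K > 0 \<and> (\<exists>Vs :: lmat list. length Vs = K \<and>
     (\<forall>V \<in> set Vs. lmatrix V \<and> strongly_invertible V \<and> compatible_sym V) \<and>
     compatible_product (rev Vs @ [A] @ map mstar Vs) \<and>
     (\<exists>j k. mat_prod_list (rev Vs @ [A] @ map mstar Vs) $ j $ k = 0))"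
proof -
  obtain e c where al: "\<alpha> = (e, c)" and e: "e \<in> {1, -1}" and par: "odd c \<or> e = 1"
    using assms(3) by auto
  have mA: "minv e c (complex_of_real C) A"
    unfolding minv_def typed_iff[OF e]
    using assms(1,2,4-7,9) by (simp add: al type_star_def)
  obtain Vs where Vs0: "Vs \<noteq> []" and VV: "\<forall>V\<in>set Vs. lmatrix V \<and> det V = 1 \<and> typed (e, c) V"
    and z: "\<exists>j k. mat_prod_list (rev Vs @ [A] @ map mstar Vs) $ j $ k = 0"
    using main[OF e par mA] by blast
  have vt: "\<And>j. valid_type (tau (e, c) j)" using e by (simp add: tau_def valid_type_def)
  have si: "strongly_invertible V" if "det V = 1" for V
    unfolding strongly_invertible_def using that
    by (intro exI[of _ 1] exI[of _ 0]) simp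
  have cs: "compatible_sym V" if "typed (e, c) V" for V
    unfolding compatible_sym_def using that vt
    by (intro exI[of _ "tau (e, c)"]) (simp add: typed_def)
  define Ps where "Ps = rev Vs @ [A] @ map mstar Vs"
  have tP: "typed (e, c) P" if "P \<in> set Ps" for P
  proof -
    have "P \<in> set Vs \<or> P = A \<or> (\<exists>V\<in>set Vs. P = mstar V)" using that by (auto simp: Ps_def)
    thus ?thesis
    proof (elim disjE bexE)
      assume "P = A" thus ?thesis using mA by (simp add: minv_def)
    next
      fix V assume "V \<in> set Vs" "P = mstar V"
      thus ?thesis using VV typed_mstar[OF e] by auto
    qed (use VV in auto)
  qed
  have cp: "compatible_product Ps"
    unfolding compatible_product_def
  proof (intro exI[of _ "replicate (length Ps + 1) (tau (e, c))"] conjI allI impI)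
    fix i j k assume "i < length Ps"
    hence "typed (e, c) (Ps ! i)" using tP nth_mem by blast
    thus "has_sym_type (Ps ! i $ j $ k)
        (type_mul (type_inv ((replicate (length Ps + 1) (tau (e, c)) ! i) j))
          ((replicate (length Ps + 1) (tau (e, c)) ! (i + 1)) k))"
    proof -
      have i1: "i < length Ps + 1" "i + 1 < length Ps + 1" using \<open>i < length Ps\<close> by simp_all
      show ?thesis unfolding nth_replicate[OF i1(1)] nth_replicate[OF i1(2)]
        using \<open>typed (e, c) (Ps ! i)\<close> by (simp add: typed_def)
    qed
  qed (use vt in \<open>auto simp del: replicate.simps simp add: nth_replicate\<close>)
  show ?thesis
    using Vs0 VV si cs cp z unfolding Ps_def
    by (intro exI[of _ "length Vs"] conjI exI[of _ Vs]) auto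
qed
end
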